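(* Let $T_1=\{12|345,\,123|45\}$, $T_2=\{13|245,\,134|25\}$, $T_3=\{123|45,\,13|245\}$ be binary trees on leaves $\{1,\dots,5\}$. Under the JC model, $V_{T_3}\subseteq V_{T_1}\ast V_{T_2}$.
   Context: Trees are unrooted binary trees described by their nontrivial splits; $\Sigma(T)$ is the set of all splits of $T$ including trivial ones. With $G=\mathbb{Z}_2\times\mathbb{Z}_2$ and $A=(0,0)$, $C=(0,1)$, $G=(1,0)$, $T=(1,1)$, the JC model on $T$ in Fourier coordinates $q_{g_1\cdots g_5}$ is $q_{g_1\cdots g_5}=\prod_{A|B\in\Sigma(T)}a^{A|B}_{\sum_{i\in A}g_i}$ if $\sum g_i=0$ and $0$ otherwise, with $a^e_C=a^e_G=a^e_T$ for all splits $e$. $V_T\subseteq\mathbb{P}^{4^5-1}$ is the Zariski closure of the image as parameters range over complex numbers; $V\ast W$ is the join: the Zariski closure of the union of all lines meeting both $V$ and $W$. *)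

theory Defs
  imports Complex_Main
begin

datatype leaf = L1 | L2 | L3 | L4 | L5

lemma UNIV_leaf: "(UNIV :: leaf set) = {L1, L2, L3, L4, L5}"
  using leaf.exhaust by auto

instance leaf :: finite
  by standard (simp add: UNIV_leaf)

text \<open>G = Z2 x Z2 with A=(0,0), C=(0,1), G=(1,0), T=(1,1); True encodes 1.\<close>
type_synonym nuc = "bool \<times> bool"

definition nA :: nuc where "nA = (False, False)"
definition nC :: nuc where "nC = (False, True)"
definition nG :: nuc where "nG = (True, False)"
definition nT :: nuc where "nT = (True, True)"

text \<open>Group sum of the entries g_i, i in A (componentwise parity).\<close>
definition gsum :: "leaf set \<Rightarrow> (leaf \<Rightarrow> nuc) \<Rightarrow> nuc" where
  "gsum A g = (odd (card {i\<in>A. fst (g i)}), odd (card {i\<in>A. snd (g i)}))"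

type_synonym split = "leaf set set"

definition mk_split :: "leaf set \<Rightarrow> split" where
  "mk_split A = {A, - A}"

text \<open>Sigma(T): the nontrivial splits of T together with all trivial ones.\<close>
definition Sigma_splits :: "split set \<Rightarrow> split set" where
  "Sigma_splits T = T \<union> {mk_split {i} | i. True}"

text \<open>Coordinates q_{g1...g5} are indexed by g :: leaf => nuc (4^5 of them).
  For a split e, the sum over either side A in e agrees whenever the total sum is 0.\<close>
definition jc_map :: "split set \<Rightarrow> (split \<Rightarrow> nuc \<Rightarrow> complex) \<Rightarrow> ((leaf \<Rightarrow> nuc) \<Rightarrow> complex)" where
  "jc_map T a = (\<lambda>g. if gsum UNIV g = nA
      then (\<Prod>e\<in>Sigma_splits T. a e (gsum (SOME A. A \<in> e) g)) else 0)"

definition jc_params :: "split set \<Rightarrow> (split \<Rightarrow> nuc \<Rightarrow> complex) set" where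
  "jc_params T = {a. \<forall>e\<in>Sigma_splits T. a e nC = a e nG \<and> a e nG = a e nT}"

inductive_set poly_fun :: "(('i \<Rightarrow> complex) \<Rightarrow> complex) set" where
  const: "(\<lambda>x. c) \<in> poly_fun"
| coord: "(\<lambda>x. x i) \<in> poly_fun"
| add: "p \<in> poly_fun \<Longrightarrow> q \<in> poly_fun \<Longrightarrow> (\<lambda>x. p x + q x) \<in> poly_fun"
| mult: "p \<in> poly_fun \<Longrightarrow> q \<in> poly_fun \<Longrightarrow> (\<lambda>x. p x * q x) \<in> poly_fun"

definition zariski_closed :: "('i \<Rightarrow> complex) set \<Rightarrow> bool" where
  "zariski_closed Z \<longleftrightarrow> (\<exists>P \<subseteq> poly_fun. Z = {x. \<forall>p\<in>P. p x = 0})"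

definition zariski_closure :: "('i \<Rightarrow> complex) set \<Rightarrow> ('i \<Rightarrow> complex) set" where
  "zariski_closure S = \<Inter> {Z. zariski_closed Z \<and> S \<subseteq> Z}"

text \<open>Affine cone over V_T in C^(4^5).\<close>
definition V_JC :: "split set \<Rightarrow> ((leaf \<Rightarrow> nuc) \<Rightarrow> complex) set" where
  "V_JC T = zariski_closure (jc_map T ` jc_params T)"

text \<open>Affine cone over the join of the projective varieties with affine cones V, W.\<close>
definition join :: "('i \<Rightarrow> complex) set \<Rightarrow> ('i \<Rightarrow> complex) set \<Rightarrow> ('i \<Rightarrow> complex) set" where
  "join V W = zariski_closure {(\<lambda>i. v i + w i) | v w. v \<in> V \<and> w \<in> W}"

definition T1 :: "split set" where
  "T1 = {mk_split {L1, L2}, mk_split {L1, L2, L3}}"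
definition T2 :: "split set" where
  "T2 = {mk_split {L1, L3}, mk_split {L1, L3, L4}}"
definition T3 :: "split set" where
  "T3 = {mk_split {L1, L2, L3}, mk_split {L1, L3}}"

end

theory Submission
  imports Defs
begin
lemma set_eq_leaf: "A = B \<longleftrightarrow> (L1\<in>A \<longleftrightarrow> L1\<in>B) \<and> (L2\<in>A \<longleftrightarrow> L2\<in>B) \<and> (L3\<in>A \<longleftrightarrow> L3\<in>B) \<and> (L4\<in>A \<longleftrightarrow> L4\<in>B) \<and> (L5\<in>A \<longleftrightarrow> L5\<in>B)"
  (is "_ \<longleftrightarrow> ?R")
proof
  assume r: ?R show "A = B"
  proof (rule set_eqI)
    fix x show "x \<in> A \<longleftrightarrow> x \<in> B" using r by (cases x) auto
  qed
qed simp
lemma mk_split_eq: "mk_split A = mk_split B \<longleftrightarrow> A = B \<or> A = - B"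
  unfolding mk_split_def by (auto simp: doubleton_eq_iff)

lemma triv_eq: "{mk_split {i} | i. True} = {mk_split {L1}, mk_split {L2}, mk_split {L3}, mk_split {L4}, mk_split {L5}}"
proof -
  have "{mk_split {i} | i. True} = (\<lambda>i. mk_split {i}) ` UNIV" by auto
  then show ?thesis by (simp add: UNIV_leaf)
qed

lemma S3: "Sigma_splits T3 = {mk_split {L1,L2,L3}, mk_split {L1,L3}, mk_split {L1}, mk_split {L2}, mk_split {L3}, mk_split {L4}, mk_split {L5}}"
  unfolding Sigma_splits_def T3_def triv_eq by auto

lemma P3: "prod F (Sigma_splits T3) = F (mk_split {L1,L2,L3}) * F (mk_split {L1,L3}) * F (mk_split {L1}) * F (mk_split {L2}) * F (mk_split {L3}) * F (mk_split {L4}) * F (mk_split {L5})"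
  unfolding S3 by (simp add: mk_split_eq set_eq_leaf mult.assoc)
lemma S1: "Sigma_splits T1 = {mk_split {L1,L2}, mk_split {L1,L2,L3}, mk_split {L1}, mk_split {L2}, mk_split {L3}, mk_split {L4}, mk_split {L5}}"
  unfolding Sigma_splits_def T1_def triv_eq by auto
lemma P1: "prod F (Sigma_splits T1) = F (mk_split {L1,L2}) * F (mk_split {L1,L2,L3}) * F (mk_split {L1}) * F (mk_split {L2}) * F (mk_split {L3}) * F (mk_split {L4}) * F (mk_split {L5})"
  unfolding S1 by (simp add: mk_split_eq set_eq_leaf mult.assoc)
lemma S2: "Sigma_splits T2 = {mk_split {L1,L3}, mk_split {L1,L3,L4}, mk_split {L1}, mk_split {L2}, mk_split {L3}, mk_split {L4}, mk_split {L5}}"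
  unfolding Sigma_splits_def T2_def triv_eq by auto
lemma P2: "prod F (Sigma_splits T2) = F (mk_split {L1,L3}) * F (mk_split {L1,L3,L4}) * F (mk_split {L1}) * F (mk_split {L2}) * F (mk_split {L3}) * F (mk_split {L4}) * F (mk_split {L5})"
  unfolding S2 by (simp add: mk_split_eq set_eq_leaf mult.assoc)

definition xorn :: "nuc \<Rightarrow> nuc \<Rightarrow> nuc" where
  "xorn a b = (fst a \<noteq> fst b, snd a \<noteq> snd b)"

lemma card_filter_Un:
  fixes A B :: "leaf set"
  assumes "A \<inter> B = {}"
  shows "card {j \<in> A \<union> B. P j} = card {j \<in> A. P j} + card {j \<in> B. P j}"
proof -
  have "{j \<in> A \<union> B. P j} = {j \<in> A. P j} \<union> {j \<in> B. P j}" by auto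
  moreover have "{j \<in> A. P j} \<inter> {j \<in> B. P j} = {}" using assms by auto
  ultimately show ?thesis by (metis card_Un_disjoint finite)
qed

lemma gsum_Un: assumes d: "A \<inter> B = {}" shows "gsum (A \<union> B) g = xorn (gsum A g) (gsum B g)"
  unfolding gsum_def xorn_def
  using card_filter_Un[OF d, of "\<lambda>i. fst (g i)"] card_filter_Un[OF d, of "\<lambda>i. snd (g i)"]
  by simp

lemma gsum_empty: "gsum {} g = nA"
  unfolding gsum_def nA_def by simp

lemma gsum_insert: "i \<notin> A \<Longrightarrow> gsum (insert i A) g = xorn (g i) (gsum A g)"
proof -
  assume "i \<notin> A"
  then have "gsum ({i} \<union> A) g = xorn (gsum {i} g) (gsum A g)" by (intro gsum_Un) auto
  moreover have "gsum {i} g = g i"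
  proof -
    have e: "\<And>P. {j \<in> {i}. P j} = (if P i then {i} else {})" by auto
    show ?thesis unfolding gsum_def e by (cases "g i") auto
  qed
  ultimately show ?thesis by simp
qed

lemma xorn_nA[simp]: "xorn x nA = x"
  unfolding xorn_def nA_def by (cases x) auto

lemma gsum_compl: "gsum UNIV g = nA \<Longrightarrow> gsum (- A) g = gsum A g"
proof -
  assume u: "gsum UNIV g = nA"
  have "gsum (A \<union> - A) g = xorn (gsum A g) (gsum (-A) g)" by (intro gsum_Un) auto
  then have "xorn (gsum A g) (gsum (-A) g) = nA" using u by simp
  then show ?thesis unfolding xorn_def nA_def
    by (cases "gsum A g"; cases "gsum (-A) g") auto
qed

lemma some_side: "gsum UNIV g = nA \<Longrightarrow> gsum (SOME A. A \<in> mk_split B) g = gsum B g"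
proof -
  assume u: "gsum UNIV g = nA"
  have "(SOME A. A \<in> mk_split B) \<in> mk_split B" by (rule someI) (auto simp: mk_split_def)
  then show ?thesis using gsum_compl[OF u, of B] unfolding mk_split_def by auto
qed

lemma param_val:
  assumes "a \<in> jc_params T" "e \<in> Sigma_splits T" "n \<noteq> nA"
  shows "a e n = a e nC"
proof -
  obtain x y where n: "n = (x, y)" by (cases n)
  show ?thesis using assms unfolding jc_params_def nA_def nC_def nG_def nT_def n
    by (cases x; cases y) auto
qed

lemma key_xor: "xorn g1 (xorn g2 g3) = nA \<Longrightarrow> xorn g1 g3 = g2"
  unfolding xorn_def nA_def by (cases g1; cases g2; cases g3) auto

lemma decomp:
  assumes a: "a \<in> jc_params T3"
  defines "f \<equiv> mk_split {L1,L2,L3}" and "h \<equiv> mk_split {L1,L3}"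
  defines "a1 \<equiv> (\<lambda>e n. if e = mk_split {L1,L2} then 1
             else if e = f then (if n = nA then a f nA - a f nC else 0)
             else if e = mk_split {L2} then a (mk_split {L2}) n * a h n else a e n)"
  defines "a2 \<equiv> (\<lambda>e n. if e = mk_split {L1,L3,L4} then 1
             else if e = mk_split {L1} then a f nC * a (mk_split {L1}) n else a e n)"
  shows "a1 \<in> jc_params T1" "a2 \<in> jc_params T2"
    "jc_map T3 a = (\<lambda>g. jc_map T1 a1 g + jc_map T2 a2 g)"
proof -
  have pa: "\<And>e. e \<in> Sigma_splits T3 \<Longrightarrow> a e nC = a e nG \<and> a e nG = a e nT"
    using a unfolding jc_params_def by blast
  have nn: "nC \<noteq> nA" "nG \<noteq> nA" "nT \<noteq> nA" unfolding nA_def nC_def nG_def nT_def by auto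
  show "a1 \<in> jc_params T1"
    unfolding jc_params_def S1 a1_def f_def h_def
    using pa nn by (auto simp: S3 mk_split_eq set_eq_leaf)
  show "a2 \<in> jc_params T2"
    unfolding jc_params_def S2 a2_def f_def h_def
    using pa nn by (auto simp: S3 mk_split_eq set_eq_leaf)
  show "jc_map T3 a = (\<lambda>g. jc_map T1 a1 g + jc_map T2 a2 g)"
  proof
    fix g
    show "jc_map T3 a g = jc_map T1 a1 g + jc_map T2 a2 g"
    proof (cases "gsum UNIV g = nA")
      case False then show ?thesis unfolding jc_map_def by simp
    next
      case u: True
      define X where "X = gsum {L1,L2,L3} g"
      define Y where "Y = gsum {L1,L3} g"
      have X: "X = xorn (g L1) (xorn (g L2) (g L3))" unfolding X_def by (simp add: gsum_insert gsum_empty)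
      have Y: "Y = xorn (g L1) (g L3)" unfolding Y_def by (simp add: gsum_insert gsum_empty)
      have s1: "\<And>i. gsum {i} g = g i" by (simp add: gsum_insert gsum_empty)
      have fS: "f \<in> Sigma_splits T3" "h \<in> Sigma_splits T3" unfolding f_def h_def S3 by auto
      have e3: "jc_map T3 a g = a f X * a h Y * a (mk_split {L1}) (g L1) * a (mk_split {L2}) (g L2)
          * a (mk_split {L3}) (g L3) * a (mk_split {L4}) (g L4) * a (mk_split {L5}) (g L5)"
        unfolding jc_map_def P3 some_side[OF u] s1 X_def Y_def f_def h_def if_P[OF u] by (rule refl)
      have e1: "jc_map T1 a1 g = a1 (mk_split {L1,L2}) (gsum {L1,L2} g) * a1 f X * a1 (mk_split {L1}) (g L1) * a1 (mk_split {L2}) (g L2)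
          * a1 (mk_split {L3}) (g L3) * a1 (mk_split {L4}) (g L4) * a1 (mk_split {L5}) (g L5)"
        unfolding jc_map_def P1 some_side[OF u] s1 X_def f_def if_P[OF u] by (rule refl)
      have e2: "jc_map T2 a2 g = a2 h Y * a2 (mk_split {L1,L3,L4}) (gsum {L1,L3,L4} g) * a2 (mk_split {L1}) (g L1) * a2 (mk_split {L2}) (g L2)
          * a2 (mk_split {L3}) (g L3) * a2 (mk_split {L4}) (g L4) * a2 (mk_split {L5}) (g L5)"
        unfolding jc_map_def P2 some_side[OF u] s1 Y_def h_def if_P[OF u] by (rule refl)
      have e1': "jc_map T1 a1 g = (if X = nA then a f nA - a f nC else 0) * a (mk_split {L1}) (g L1) * (a (mk_split {L2}) (g L2) * a h (g L2))
          * a (mk_split {L3}) (g L3) * a (mk_split {L4}) (g L4) * a (mk_split {L5}) (g L5)"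
        unfolding e1 unfolding a1_def f_def h_def by (simp add: mk_split_eq set_eq_leaf)
      have e2': "jc_map T2 a2 g = a h Y * (a f nC * a (mk_split {L1}) (g L1)) * a (mk_split {L2}) (g L2)
          * a (mk_split {L3}) (g L3) * a (mk_split {L4}) (g L4) * a (mk_split {L5}) (g L5)"
        unfolding e2 unfolding a2_def f_def h_def by (simp add: mk_split_eq set_eq_leaf)
      show ?thesis
      proof (cases "X = nA")
        case True
        have "Y = g L2" unfolding Y by (rule key_xor) (use True X in simp)
        then show ?thesis unfolding e3 e1' e2' using True by (simp add: algebra_simps)
      next
        case False
        then have "a f X = a f nC" using param_val[OF a fS(1)] by simp
        then show ?thesis unfolding e3 e1' e2' using False by (simp add: algebra_simps)
      qed
    qed
  qed
qed

lemma decomp_ex: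
  assumes a: "a \<in> jc_params T3"
  shows "\<exists>a1 a2. a1 \<in> jc_params T1 \<and> a2 \<in> jc_params T2 \<and> jc_map T3 a = (\<lambda>g. jc_map T1 a1 g + jc_map T2 a2 g)"
  using decomp[OF a] by blast

lemma closure_sub: "S \<subseteq> zariski_closure S"
  unfolding zariski_closure_def by auto

lemma closure_into: "S \<subseteq> zariski_closure S' \<Longrightarrow> zariski_closure S \<subseteq> zariski_closure S'"
  unfolding zariski_closure_def by blast

theorem theorem5:
  shows "V_JC T3 \<subseteq> join (V_JC T1) (V_JC T2)"
  unfolding V_JC_def join_def
proof (rule closure_into)
  let ?S = "{(\<lambda>i. v i + w i) | v w.
        v \<in> zariski_closure (jc_map T1 ` jc_params T1) \<and> w \<in> zariski_closure (jc_map T2 ` jc_params T2)}"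
  show "jc_map T3 ` jc_params T3 \<subseteq> zariski_closure ?S"
  proof
    fix x assume "x \<in> jc_map T3 ` jc_params T3"
    then obtain a where a: "a \<in> jc_params T3" and x: "x = jc_map T3 a" by blast
    obtain a1 a2 where a1: "a1 \<in> jc_params T1" and a2: "a2 \<in> jc_params T2"
      and e: "jc_map T3 a = (\<lambda>g. jc_map T1 a1 g + jc_map T2 a2 g)"
      using decomp_ex[OF a] by blast
    have v: "jc_map T1 a1 \<in> zariski_closure (jc_map T1 ` jc_params T1)"
      by (rule subsetD[OF closure_sub]) (rule imageI[OF a1])
    have w: "jc_map T2 a2 \<in> zariski_closure (jc_map T2 ` jc_params T2)"
      by (rule subsetD[OF closure_sub]) (rule imageI[OF a2])
    have xe: "x = (\<lambda>i. jc_map T1 a1 i + jc_map T2 a2 i)" using x e by simp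
    have "x \<in> ?S"
      by (rule CollectI, rule exI[where x="jc_map T1 a1"], rule exI[where x="jc_map T2 a2"])
        (intro conjI xe v w)
    then show "x \<in> zariski_closure ?S" by (rule subsetD[OF closure_sub])
  qed
qed
end
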